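(* Let $n\ge 2$ be an integer. (i) If $n\ne 4,5$, then every polynomial $f\in\mathbb{Z}[x]$ of degree $n$ that is reducible in $\mathbb{Q}[x]$ satisfies $P(f)\le n+2$. (ii) There exists a polynomial $f\in\mathbb{Z}[x]$ of degree $n$, reducible in $\mathbb{Q}[x]$, with $P(f)\ge n+1$. (iii) If $n=4$ or $n=5$, then the maximum of $P(f)$ over all polynomials $f\in\mathbb{Z}[x]$ of degree $n$ that are reducible in $\mathbb{Q}[x]$ is exactly $8$.
   Context: For a polynomial $f$ with rational coefficients, $P(f)=\#\{m\in\mathbb{Z}: f(m)\text{ is prime}\}$. Here "$f(m)$ is prime" means that $|f(m)|$ is a prime number, so negative primes $-p$ are counted. A polynomial is reducible in $\mathbb{Q}[x]$ if it is a product of two nonconstant polynomials with rational coefficients. *)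

theory Defs
  imports "HOL-Computational_Algebra.Computational_Algebra"
begin

definition prime_args :: "int poly \<Rightarrow> int set" where
  "prime_args f = {m::int. prime \<bar>poly f m\<bar>}"

text \<open>P(f) as in the paper (card of an infinite set would be 0, so the theorem
  states finiteness explicitly where needed).\<close>
definition P :: "int poly \<Rightarrow> nat" where
  "P f = card (prime_args f)"

definition reducible_Q :: "int poly \<Rightarrow> bool" where
  "reducible_Q f \<longleftrightarrow> (\<exists>g h :: rat poly. degree g \<ge> 1 \<and> degree h \<ge> 1 \<and>
      map_poly of_int f = g * h)"

end

theory Submission
  imports "HOL-Number_Theory.Pocklington" Defs "HOL-Computational_Algebra.Polynomial_Factorial"
begin

lemma map_poly_of_int_mult:
  "map_poly (of_int :: int \<Rightarrow> rat) (p * q) = map_poly of_int p * map_poly of_int q"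
  by (rule poly_eqI) (simp add: coeff_map_poly coeff_mult)

lemma map_poly_of_int_smult:
  "map_poly (of_int :: int \<Rightarrow> rat) (Polynomial.smult c p) = Polynomial.smult (of_int c) (map_poly of_int p)"
  by (rule poly_eqI) (simp add: coeff_map_poly)

lemma map_poly_of_int_inj:
  "map_poly (of_int :: int \<Rightarrow> rat) p = map_poly of_int q \<Longrightarrow> p = q"
  by (rule poly_eqI) (metis coeff_map_poly of_int_0 of_int_eq_iff)

lemma clear_denoms:
  fixes g :: "rat poly"
  shows "\<exists>d::int. d > 0 \<and> (\<exists>G. map_poly of_int G = Polynomial.smult (of_int d) g)"
proof (induct g)
  case 0
  then show ?case by (intro exI[of _ 1]) (auto intro: exI[of _ 0])
next
  case (pCons a g)
  then obtain d G where d: "d > 0" "map_poly of_int G = Polynomial.smult (of_int d) g" by auto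
  obtain p q where pq: "quotient_of a = (p, q)" by force
  have q: "q > 0" using quotient_of_denom_pos[OF pq] .
  have a: "a = of_int p / of_int q" using quotient_of_div[OF pq] .
  have "map_poly (of_int :: int \<Rightarrow> rat) (pCons (d * p) (Polynomial.smult q G)) = Polynomial.smult (of_int (q * d)) (pCons a g)"
    using d q by (simp add: map_poly_pCons map_poly_of_int_smult a field_simps)
  then show ?case using d q by (intro exI[of _ "q*d"]) auto
qed

lemma gauss:
  fixes f :: "int poly" and g h :: "rat poly"
  assumes fgh: "map_poly of_int f = g * h" and f0: "f \<noteq> 0"
  shows "\<exists>G H. f = G * H \<and> degree G = degree g \<and> degree H = degree h"
proof -
  obtain d1 G1 where d1: "d1 > 0" "map_poly of_int G1 = Polynomial.smult (of_int d1) g"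
    using clear_denoms by blast
  obtain d2 H1 where d2: "d2 > 0" "map_poly of_int H1 = Polynomial.smult (of_int d2) h"
    using clear_denoms by blast
  have "map_poly (of_int :: int \<Rightarrow> rat) (G1 * H1) = map_poly of_int (Polynomial.smult (d1 * d2) f)"
    by (simp add: map_poly_of_int_mult map_poly_of_int_smult d1 d2 fgh mult.commute)
  then have e: "G1 * H1 = Polynomial.smult (d1 * d2) f" by (rule map_poly_of_int_inj)
  have "content (G1 * H1) = d1 * d2 * content f" using e d1 d2 by simp
  then have c: "content G1 * content H1 = d1 * d2 * content f" by (simp add: content_mult)
  have "Polynomial.smult (d1 * d2) f = Polynomial.smult (content G1 * content H1) (primitive_part G1 * primitive_part H1)"
    using e by (metis content_times_primitive_part mult_smult_left mult_smult_right smult_smult)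
  also have "\<dots> = Polynomial.smult (d1 * d2) (Polynomial.smult (content f) (primitive_part G1 * primitive_part H1))"
    using c by simp
  finally have eq: "Polynomial.smult (d1 * d2) f = Polynomial.smult (d1 * d2) (Polynomial.smult (content f) (primitive_part G1 * primitive_part H1))"
    by simp
  have "d1 * d2 \<noteq> 0" using d1 d2 by simp
  from smult_cancel[OF this eq] have "f = Polynomial.smult (content f) (primitive_part G1 * primitive_part H1)" .
  then have fe: "f = Polynomial.smult (content f) (primitive_part G1) * primitive_part H1"
    by simp
  have dG: "degree G1 = degree g"
  proof -
    have "degree (map_poly (of_int :: int \<Rightarrow> rat) G1) = degree G1" by (rule degree_map_poly) simp
    then show ?thesis using d1 by simp
  qed
  have dH: "degree H1 = degree h"
  proof -
    have "degree (map_poly (of_int :: int \<Rightarrow> rat) H1) = degree H1" by (rule degree_map_poly) simp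
    then show ?thesis using d2 by simp
  qed
  have "content f \<noteq> 0" using f0 by simp
  then have "degree (Polynomial.smult (content f) (primitive_part G1)) = degree g"
    using dG by simp
  moreover have "degree (primitive_part H1) = degree h"
    using dH by simp
  ultimately show ?thesis using fe by blast
qed


definition U :: "int poly \<Rightarrow> int set" where
  "U G = {m. \<bar>poly G m\<bar> = 1}"

lemma prime_mult_abs_unit:
  fixes a b :: int
  assumes "prime \<bar>a * b\<bar>"
  shows "\<bar>a\<bar> = 1 \<or> \<bar>b\<bar> = 1"
proof -
  have "irreducible (\<bar>a\<bar> * \<bar>b\<bar>)" using assms by (simp add: abs_mult prime_elem_imp_irreducible)
  then have "is_unit \<bar>a\<bar> \<or> is_unit \<bar>b\<bar>" by (rule irreducibleD) simp
  then show ?thesis by auto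
qed

lemma prime_args_sub: "prime_args (G * H) \<subseteq> U G \<union> U H"
  unfolding prime_args_def U_def using prime_mult_abs_unit by auto

lemma poly_diff_dvd:
  fixes p :: "int poly"
  shows "(x - y) dvd (poly p x - poly p y)"
proof -
  have "poly (p - [:poly p y:]) y = 0" by simp
  then obtain r where r: "p - [:poly p y:] = [:-y, 1:] * r"
    by (metis poly_eq_0_iff_dvd dvdE)
  have "poly p x - poly p y = poly (p - [:poly p y:]) x" by simp
  also have "\<dots> = (x - y) * poly r x" by (simp add: r algebra_simps)
  finally show ?thesis by simp
qed

lemma two_roots_dvd:
  fixes p :: "int poly"
  assumes "poly p a = 0" "poly p b = 0" "a \<noteq> b"
  shows "((x - a) * (x - b)) dvd poly p x"
proof -
  obtain r where r: "p = [:-a, 1:] * r" using assms(1) by (metis poly_eq_0_iff_dvd dvdE)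
  have "(b - a) * poly r b = 0" using assms(2) unfolding r by (simp add: algebra_simps)
  moreover have "b - a \<noteq> 0" using assms(3) by simp
  ultimately have "poly r b = 0" by simp
  then obtain r2 where r2: "r = [:-b, 1:] * r2" by (metis poly_eq_0_iff_dvd dvdE)
  have "poly p x = (x - a) * (x - b) * poly r2 x" by (simp add: r r2 algebra_simps)
  then show ?thesis by simp
qed

lemma three_distinct:
  assumes "finite S" "card S \<ge> 3"
  obtains x y z where "x \<in> S" "y \<in> S" "z \<in> S" "x \<noteq> y" "x \<noteq> z" "y \<noteq> z"
proof -
  obtain x where x: "x \<in> S" using assms by fastforce
  have c1: "card (S - {x}) \<ge> 2" using assms x by simp
  then obtain y where y: "y \<in> S - {x}" by (metis all_not_in_conv card.empty not_numeral_le_zero)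
  have "card (S - {x} - {y}) \<ge> 1" using assms c1 y by simp
  then obtain z where z: "z \<in> S - {x} - {y}" by (metis all_not_in_conv card.empty not_one_le_zero)
  show ?thesis using that x y z by blast
qed

lemma card_le2:
  fixes S :: "int set"
  assumes "finite S" "\<And>x y z. x \<in> S \<Longrightarrow> y \<in> S \<Longrightarrow> z \<in> S \<Longrightarrow> x \<noteq> y \<Longrightarrow> x \<noteq> z \<Longrightarrow> y \<noteq> z \<Longrightarrow> False"
  shows "card S \<le> 2"
proof (rule ccontr)
  assume "\<not> card S \<le> 2"
  then have "card S \<ge> 3" by simp
  from three_distinct[OF assms(1) this] show False using assms(2) by metis
qed


lemma inter_card:
  fixes x x' :: int and S :: "int set"
  assumes "x < x'" "\<And>y. y \<in> S \<Longrightarrow> \<bar>y - x\<bar> \<le> 2 \<and> \<bar>y - x'\<bar> \<le> 2 \<and> y \<noteq> x \<and> y \<noteq> x'"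
  shows "card S \<le> 2"
proof -
  define I where "I = {x'-2..x+2}"
  have sub: "S \<subseteq> I - {x, x'}" using assms(2) unfolding I_def by (force simp: abs_le_iff)
  have cI: "card I = nat (x - x' + 5)" unfolding I_def by simp
  show ?thesis
  proof (cases "x' \<ge> x + 3")
    case True
    have "card S \<le> card I" using sub by (intro card_mono) (auto simp: I_def)
    then show ?thesis using True cI by simp
  next
    case False
    have "{x, x'} \<subseteq> I" using False assms(1) by (auto simp: I_def)
    then have "card (I - {x, x'}) = card I - 2" using assms(1) by (subst card_Diff_subset) (auto simp: I_def)
    moreover have "card S \<le> card (I - {x, x'})" using sub by (intro card_mono) (auto simp: I_def)
    ultimately show ?thesis using False assms(1) cI by simp
  qed
qed

lemma comb_one_dir:
  fixes A B :: "int set"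
  assumes fin: "finite B"
    and cross: "\<And>a b. a \<in> A \<Longrightarrow> b \<in> B \<Longrightarrow> \<bar>a - b\<bar> \<le> 2 \<and> a \<noteq> b"
  shows "card A \<ge> 2 \<Longrightarrow> card B \<le> 2"
proof -
  assume "card A \<ge> 2"
  then have fA: "finite A" by (metis card.infinite not_numeral_le_zero)
  obtain x y where xy: "x \<in> A" "y \<in> A" "x \<noteq> y"
    using \<open>card A \<ge> 2\<close> by (metis One_nat_def Suc_1 card_le_Suc_iff fA insert_iff not_less_eq_eq)
  have c2: "\<And>a b. a \<in> A \<Longrightarrow> b \<in> B \<Longrightarrow> \<bar>b - a\<bar> \<le> 2 \<and> b \<noteq> a"
    using cross by (metis abs_minus_commute)
  show "card B \<le> 2"
  proof (cases "x < y")
    case True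
    show ?thesis by (rule inter_card[OF True]) (use c2 xy in \<open>auto\<close>)
  next
    case False
    then have "y < x" using xy by simp
    show ?thesis by (rule inter_card[OF \<open>y < x\<close>]) (use c2 xy in \<open>auto\<close>)
  qed
qed

lemma comb_single:
  fixes A B :: "int set"
  assumes fin: "finite B"
    and cross: "\<And>a b. a \<in> A \<Longrightarrow> b \<in> B \<Longrightarrow> \<bar>a - b\<bar> \<le> 2 \<and> a \<noteq> b"
    and nA: "\<And>a. a \<in> A \<Longrightarrow> \<not> (a - 2 \<in> B \<and> a + 2 \<in> B)"
    and x: "x \<in> A"
  shows "card B \<le> 3"
proof (cases "x - 2 \<in> B")
  case True
  then have "x + 2 \<notin> B" using nA x by blast
  have "B \<subseteq> {x-2, x-1, x+1}"
  proof
    fix b assume b: "b \<in> B"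
    have "\<bar>x - b\<bar> \<le> 2" "x \<noteq> b" "b \<noteq> x + 2" using cross[OF x b] b \<open>x + 2 \<notin> B\<close> by auto
    then have "b = x-2 \<or> b = x-1 \<or> b = x+1" by arith
    then show "b \<in> {x-2, x-1, x+1}" by auto
  qed
  then have "card B \<le> card {x-2, x-1, x+1}" by (intro card_mono) auto
  also have "\<dots> \<le> 3" by (rule card_insert_le_m1) (auto intro: card_insert_le_m1)
  finally show ?thesis .
next
  case False
  have "B \<subseteq> {x+2, x-1, x+1}"
  proof
    fix b assume b: "b \<in> B"
    have "\<bar>x - b\<bar> \<le> 2" "x \<noteq> b" "b \<noteq> x - 2" using cross[OF x b] b False by auto
    then have "b = x+2 \<or> b = x-1 \<or> b = x+1" by arith
    then show "b \<in> {x+2, x-1, x+1}" by auto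
  qed
  then have "card B \<le> card {x+2, x-1, x+1}" by (intro card_mono) auto
  also have "\<dots> \<le> 3" by (rule card_insert_le_m1) (auto intro: card_insert_le_m1)
  finally show ?thesis .
qed

lemma comb:
  fixes A B :: "int set"
  assumes fA: "finite A" and fB: "finite B" and ne: "A \<noteq> {}" "B \<noteq> {}"
    and cross: "\<And>a b. a \<in> A \<Longrightarrow> b \<in> B \<Longrightarrow> \<bar>a - b\<bar> \<le> 2 \<and> a \<noteq> b"
    and nA: "\<And>a. a \<in> A \<Longrightarrow> \<not> (a - 2 \<in> B \<and> a + 2 \<in> B)"
    and nB: "\<And>b. b \<in> B \<Longrightarrow> \<not> (b - 2 \<in> A \<and> b + 2 \<in> A)"
  shows "card (A \<union> B) \<le> 4"
proof -
  have cross': "\<And>a b. a \<in> B \<Longrightarrow> b \<in> A \<Longrightarrow> \<bar>a - b\<bar> \<le> 2 \<and> a \<noteq> b"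
    using cross by (force simp: abs_minus_commute)
  have u: "card (A \<union> B) \<le> card A + card B" by (rule card_Un_le)
  obtain x where x: "x \<in> A" using ne by blast
  obtain y where y: "y \<in> B" using ne by blast
  have 1: "card B \<le> 3" by (rule comb_single[OF fB cross nA x])
  have 2: "card A \<le> 3" by (rule comb_single[OF fA cross' nB y])
  have 3: "card A \<ge> 2 \<Longrightarrow> card B \<le> 2" by (rule comb_one_dir[OF fB cross])
  have 4: "card B \<ge> 2 \<Longrightarrow> card A \<le> 2" by (rule comb_one_dir[OF fA cross'])
  have "card A \<ge> 1" "card B \<ge> 1" using fA fB ne by (auto simp: Suc_le_eq card_gt_0_iff)
  then show ?thesis using u 1 2 3 4 by linarith
qed

definition S1 :: "int poly \<Rightarrow> int set" where "S1 G = {m. poly G m = 1}"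
definition S2 :: "int poly \<Rightarrow> int set" where "S2 G = {m. poly G m = -1}"

lemma U_split: "U G = S1 G \<union> S2 G"
  unfolding U_def S1_def S2_def by (auto simp: abs_eq_iff)

lemma S1_fin: "degree G \<ge> 1 \<Longrightarrow> finite (S1 G) \<and> card (S1 G) \<le> degree G"
proof -
  assume d: "degree G \<ge> 1"
  have ne: "G - 1 \<noteq> 0" using d by (metis degree_1 le_numeral_extra(2) right_minus_eq)
  have "G - 1 = G + (-1)" by simp
  then have dg: "degree (G - 1) = degree G" using d by (simp only:) (rule degree_add_eq_left, simp)
  have "S1 G = {m. poly (G - 1) m = 0}" by (simp add: S1_def)
  then show ?thesis using poly_roots_finite[OF ne] card_poly_roots_bound[OF ne] dg by simp
qed

lemma S2_fin: "degree G \<ge> 1 \<Longrightarrow> finite (S2 G) \<and> card (S2 G) \<le> degree G"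
proof -
  assume d: "degree G \<ge> 1"
  have ne: "G + 1 \<noteq> 0" using d by (metis add.inverse_neutral add_eq_0_iff2 degree_1 degree_minus le_numeral_extra(2))
  have dg: "degree (G + 1) = degree G" using d by (simp add: degree_add_eq_left)
  have "S2 G = {m. poly (G + 1) m = 0}" by (auto simp: S2_def add_eq_0_iff2)
  then show ?thesis using poly_roots_finite[OF ne] card_poly_roots_bound[OF ne] dg by simp
qed

lemma U_fin: "degree G \<ge> 1 \<Longrightarrow> finite (U G)"
  using S1_fin S2_fin U_split by simp

lemma U_both:
  assumes d: "degree G \<ge> 1" and ne: "S1 G \<noteq> {}" "S2 G \<noteq> {}"
  shows "card (U G) \<le> 4"
proof -
  have cross: "\<bar>a - b\<bar> \<le> 2 \<and> a \<noteq> b" if a: "a \<in> S1 G" and b: "b \<in> S2 G" for a b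
  proof -
    have "(a - b) dvd (poly G a - poly G b)" by (rule poly_diff_dvd)
    then have "(a - b) dvd 2" using a b by (simp add: S1_def S2_def)
    then have "\<bar>a - b\<bar> \<le> 2" using dvd_imp_le_int[of 2 "a-b"] by simp
    moreover have "a \<noteq> b" using a b by (auto simp: S1_def S2_def)
    ultimately show ?thesis by simp
  qed
  have nA: "\<not> (a - 2 \<in> S2 G \<and> a + 2 \<in> S2 G)" if a: "a \<in> S1 G" for a
  proof
    assume h: "a - 2 \<in> S2 G \<and> a + 2 \<in> S2 G"
    have "((a - (a - 2)) * (a - (a + 2))) dvd poly (G + 1) a"
      by (rule two_roots_dvd) (use h in \<open>auto simp: S2_def\<close>)
    then have "(-4::int) dvd 2" using a by (simp add: S1_def)
    then show False by simp
  qed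
  have nB: "\<not> (b - 2 \<in> S1 G \<and> b + 2 \<in> S1 G)" if b: "b \<in> S2 G" for b
  proof
    assume h: "b - 2 \<in> S1 G \<and> b + 2 \<in> S1 G"
    have "((b - (b - 2)) * (b - (b + 2))) dvd poly (G - 1) b"
      by (rule two_roots_dvd) (use h in \<open>auto simp: S1_def\<close>)
    then have "(-4::int) dvd -2" using b by (simp add: S2_def)
    then show False by simp
  qed
  show ?thesis unfolding U_split
    by (rule comb) (use S1_fin[OF d] S2_fin[OF d] ne cross nA nB in auto)
qed

definition Nb :: "nat \<Rightarrow> nat" where
  "Nb a = (if a = 1 then 2 else if a \<le> 3 then 4 else a)"

lemma U_card: "degree G \<ge> 1 \<Longrightarrow> card (U G) \<le> Nb (degree G)"
proof -
  assume d: "degree G \<ge> 1"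
  have c2: "card (U G) \<le> 2 * degree G"
    using card_Un_le[of "S1 G" "S2 G"] S1_fin[OF d] S2_fin[OF d] U_split by simp
  show ?thesis
  proof (cases "S1 G = {} \<or> S2 G = {}")
    case True
    then have "card (U G) \<le> degree G" using S1_fin[OF d] S2_fin[OF d] U_split by auto
    then show ?thesis unfolding Nb_def by auto
  next
    case False
    then have "card (U G) \<le> 4" using U_both d by blast
    then show ?thesis using c2 unfolding Nb_def by auto
  qed
qed


lemma prime_facts:
  fixes x :: int
  assumes "prime \<bar>x\<bar>"
  shows "x \<noteq> 0 \<and> x \<noteq> 1 \<and> x \<noteq> -1 \<and> (2 dvd x \<longrightarrow> x = 2 \<or> x = -2) \<and> (3 dvd x \<longrightarrow> x = 3 \<or> x = -3)"
proof -
  have a: "x \<noteq> 0 \<and> x \<noteq> 1 \<and> x \<noteq> -1" using assms by auto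
  have b: "q = \<bar>x\<bar>" if "prime q" "q dvd x" for q :: int
    using that assms by (metis dvd_abs_iff prime_nat_iff_prime primes_dvd_imp_eq)
  have "prime (2::int)" "prime (3::int)" by auto
  then show ?thesis using a b[of 2] b[of 3] by (auto simp: abs_if split: if_splits)
qed

lemma four_vals:
  fixes u w :: int
  assumes u: "u = 1 \<or> u = -1 \<or> u = 2 \<or> u = -2"
    and p: "prime \<bar>w\<bar>" "prime \<bar>w + u\<bar>" "prime \<bar>w + 2*u\<bar>" "prime \<bar>w + 3*u\<bar>"
  shows False
proof -
  note f = prime_facts[OF p(1)] prime_facts[OF p(2)] prime_facts[OF p(3)] prime_facts[OF p(4)]
  from u show False
  proof (elim disjE)
    assume "u = 1" then show False using f by presburger
  next
    assume "u = -1" then show False using f by presburger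
  next
    assume "u = 2" then show False using f by presburger
  next
    assume "u = -2" then show False using f by presburger
  qed
qed


lemma cross_lemma:
  assumes a: "a \<in> S1 G" and b: "b \<in> S2 G"
  shows "\<bar>a - b\<bar> \<le> 2 \<and> a \<noteq> b"
proof -
  have "(a - b) dvd (poly G a - poly G b)" by (rule poly_diff_dvd)
  then have "(a - b) dvd 2" using a b by (simp add: S1_def S2_def)
  then have "\<bar>a - b\<bar> \<le> 2" using dvd_imp_le_int[of 2 "a-b"] by simp
  moreover have "a \<noteq> b" using a b by (auto simp: S1_def S2_def)
  ultimately show ?thesis by simp
qed

lemma poly_linear: "degree (G::int poly) = 1 \<Longrightarrow> poly G t = coeff G 0 + coeff G 1 * t"
proof -
  assume d: "degree G = 1"
  have "poly G t = (\<Sum>i\<le>1. coeff G i * t ^ i)" using poly_altdef[of G t] d by simp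
  also have "\<dots> = coeff G 0 + coeff G 1 * t" by (simp add: atMost_Suc)
  finally show ?thesis .
qed

lemma card2_ord:
  fixes S :: "int set"
  assumes "card S = 2"
  obtains x y where "S = {x, y}" "x < y"
proof -
  obtain x y where "S = {x, y}" "x \<noteq> y" using assms card_2_iff by metis
  then show ?thesis using that by (metis insert_commute linorder_neqE)
qed

lemma n3_bound:
  fixes G H :: "int poly"
  assumes dG: "degree G = 1" and dH: "degree H = 2"
  shows "card (prime_args (G * H)) \<le> 5"
proof (rule ccontr)
  assume "\<not> ?thesis"
  then have c6: "card (prime_args (G * H)) \<ge> 6" by simp
  have fG: "finite (U G)" and fH: "finite (U H)" using U_fin dG dH by auto
  have sub: "prime_args (G * H) \<subseteq> U G \<union> U H" by (rule prime_args_sub)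
  have cG: "card (U G) \<le> 2" using U_card[of G] dG by (simp add: Nb_def)
  have cH: "card (U H) \<le> 4" using U_card[of H] dH by (simp add: Nb_def)
  have "card (prime_args (G * H)) \<le> card (U G \<union> U H)" using sub fG fH by (intro card_mono) auto
  also have "\<dots> \<le> card (U G) + card (U H)" by (rule card_Un_le)
  finally have cG2: "card (U G) = 2" and cH4: "card (U H) = 4" using c6 cG cH by auto
  have eqPA: "prime_args (G * H) = U G \<union> U H"
  proof (rule card_subset_eq)
    show "finite (U G \<union> U H)" using fG fH by simp
    show "prime_args (G * H) \<subseteq> U G \<union> U H" by (rule sub)
    have "card (U G \<union> U H) \<le> 6" using card_Un_le[of "U G" "U H"] cG2 cH4 by simp
    moreover have "card (prime_args (G * H)) \<le> card (U G \<union> U H)" using sub fG fH by (intro card_mono) auto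
    ultimately show "card (prime_args (G * H)) = card (U G \<union> U H)" using c6 by simp
  qed
  have s1: "finite (S1 H)" "card (S1 H) \<le> 2" using S1_fin[of H] dH by auto
  have s2: "finite (S2 H)" "card (S2 H) \<le> 2" using S2_fin[of H] dH by auto
  have "card (U H) \<le> card (S1 H) + card (S2 H)" unfolding U_split by (rule card_Un_le)
  then have "card (S1 H) = 2" "card (S2 H) = 2" using cH4 s1 s2 by auto
  then obtain a1 a2 b1 b2 where A: "S1 H = {a1, a2}" "a1 < a2" and B: "S2 H = {b1, b2}" "b1 < b2"
    using card2_ord by metis
  have cr: "\<bar>a - b\<bar> \<le> 2 \<and> a \<noteq> b" if "a \<in> {a1, a2}" "b \<in> {b1, b2}" for a b
    using cross_lemma[of a H b] that A B by auto
  define m where "m = min a1 b1"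
  have h0: "\<bar>a1 - b1\<bar> \<le> 2 \<and> a1 \<noteq> b1" "\<bar>a1 - b2\<bar> \<le> 2 \<and> a1 \<noteq> b2"
         "\<bar>a2 - b1\<bar> \<le> 2 \<and> a2 \<noteq> b1" "\<bar>a2 - b2\<bar> \<le> 2 \<and> a2 \<noteq> b2"
    by (rule cr; simp)+
  then have h: "a1 - b1 \<le> 2" "b1 - a1 \<le> 2" "a1 - b2 \<le> 2" "b2 - a1 \<le> 2"
      "a2 - b1 \<le> 2" "b1 - a2 \<le> 2" "a2 - b2 \<le> 2" "b2 - a2 \<le> 2"
      "a1 \<noteq> b1" "a1 \<noteq> b2" "a2 \<noteq> b1" "a2 \<noteq> b2" by (simp_all add: abs_le_iff)
  have bnds: "m \<le> a1 \<and> a1 \<le> m+3 \<and> m \<le> a2 \<and> a2 \<le> m+3 \<and> m \<le> b1 \<and> b1 \<le> m+3 \<and> m \<le> b2 \<and> b2 \<le> m+3"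
  proof (cases "a1 < b1")
    case True
    then have "m = a1" by (simp add: m_def)
    moreover have "b1 \<le> a1 + 1" using h True A(2) B(2) by linarith
    ultimately show ?thesis using h True A(2) B(2) by linarith
  next
    case False
    then have "b1 < a1" using h by linarith
    then have "m = b1" by (simp add: m_def)
    moreover have "a1 \<le> b1 + 1" using h \<open>b1 < a1\<close> A(2) B(2) by linarith
    ultimately show ?thesis using h \<open>b1 < a1\<close> A(2) B(2) by linarith
  qed
  have "U H \<subseteq> {m..m+3}" unfolding U_split A B using bnds by simp
  moreover have "card {m..m+3} = 4" by simp
  ultimately have UH: "U H = {m..m+3}" using cH4 card_subset_eq[of "{m..m+3}" "U H"] by simp
  have pG: "prime \<bar>poly G t\<bar>" if "t \<in> {m..m+3}" for t
  proof -
    have "t \<in> prime_args (G * H)" using that UH eqPA by auto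
    then have "prime \<bar>poly G t * poly H t\<bar>" by (simp add: prime_args_def)
    moreover have "t \<in> U H" using that UH by simp
    then have h1: "\<bar>poly H t\<bar> = 1" by (simp add: U_def)
    have "\<bar>poly G t * poly H t\<bar> = \<bar>poly G t\<bar>" by (simp only: abs_mult h1 mult_1_right)
    ultimately show ?thesis by simp
  qed
  define u where "u = coeff G 1"
  define v where "v = coeff G 0"
  have pl: "poly G t = v + u * t" for t using poly_linear[OF dG] by (simp add: u_def v_def)
  have "G \<noteq> 0" using dG by auto
  then have "lead_coeff G \<noteq> 0" by simp
  then have u0: "u \<noteq> 0" using dG by (simp add: u_def)
  from card2_ord[OF cG2] obtain m1 m2 where m12: "U G = {m1, m2}" "m1 < m2" .
  have "m1 \<in> U G" "m2 \<in> U G" using m12 by auto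
  then have A1: "\<bar>v + u * m1\<bar> = 1" and A2: "\<bar>v + u * m2\<bar> = 1" by (simp_all add: U_def pl)
  have ne: "v + u * m1 \<noteq> v + u * m2" using u0 m12 by simp
  have "v + u * m1 = 1 \<or> v + u * m1 = -1" using A1 by linarith
  moreover have "v + u * m2 = 1 \<or> v + u * m2 = -1" using A2 by linarith
  ultimately have "(v + u * m1) - (v + u * m2) = 2 \<or> (v + u * m2) - (v + u * m1) = 2"
    using ne by (smt (verit))
  then have "u * (m1 - m2) = 2 \<or> u * (m2 - m1) = 2" by (simp add: right_diff_distrib)
  then have "u dvd 2" by (metis dvd_triv_left)
  then have "\<bar>u\<bar> \<le> 2" using dvd_imp_le_int[of 2 u] by simp
  then have uc: "u = 1 \<or> u = -1 \<or> u = 2 \<or> u = -2" using u0 by arith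
  have e: "poly G (m + k) = v + u * m + k * u" for k by (simp add: pl algebra_simps)
  have "prime \<bar>poly G (m + 0)\<bar>" "prime \<bar>poly G (m + 1)\<bar>" "prime \<bar>poly G (m + 2)\<bar>" "prime \<bar>poly G (m + 3)\<bar>"
    by (rule pG; simp)+
  then have "prime \<bar>v + u * m\<bar>" "prime \<bar>v + u * m + u\<bar>" "prime \<bar>v + u * m + 2 * u\<bar>" "prime \<bar>v + u * m + 3 * u\<bar>"
    unfolding e by simp_all
  then show False using four_vals[OF uc] by blast
qed


lemma ord_full:
  fixes p a A :: nat
  assumes p: "prime p" and A: "A > 0" and h1: "[a ^ A = 1] (mod p)"
    and h2: "\<And>q. prime q \<Longrightarrow> q dvd A \<Longrightarrow> \<not> [a ^ (A div q) = 1] (mod p)"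
  shows "A dvd p - 1"
proof -
  have np: "\<not> p dvd a"
  proof
    assume "p dvd a"
    then have "p dvd a ^ A" using A by (meson dvd_power dvd_trans)
    then have "[a ^ A = 0] (mod p)" by (simp add: cong_0_iff)
    then have "[1 = 0] (mod p)" using h1 by (metis cong_sym cong_trans)
    then show False using p by (simp add: cong_0_iff)
  qed
  define e where "e = ord p a"
  have eA: "e dvd A" using h1 ord_divides unfolding e_def by blast
  have ep: "e dvd p - 1" using fermat_theorem[OF p np] ord_divides unfolding e_def by blast
  have "e = A"
  proof (rule ccontr)
    assume ne: "e \<noteq> A"
    obtain k where k: "A = e * k" using eA by blast
    have "k \<noteq> 1" using ne k by simp
    then obtain q where q: "prime q" "q dvd k" using prime_factor_nat by blast
    have "q dvd A" using q k by simp
    have "A div q = e * (k div q)" using q k by (simp add: div_mult_swap)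
    then have "e dvd A div q" by simp
    then have "[a ^ (A div q) = 1] (mod p)" using ord_divides unfolding e_def by blast
    then show False using h2[OF q(1) \<open>q dvd A\<close>] by simp
  qed
  then show ?thesis using ep by simp
qed

definition xm :: "nat \<Rightarrow> 'a::comm_ring_1 poly" where
  "xm k = [:0, 1:] ^ k - 1"

lemma poly_xm [simp]: "poly (xm k) x = x ^ k - 1"
  by (simp add: xm_def)

lemma xm_dvd: "d dvd k \<Longrightarrow> xm d dvd xm k"
proof -
  assume "d dvd k"
  then obtain m where m: "k = d * m" by blast
  have "xm k = ([:0, 1:] ^ d) ^ m - 1" by (simp add: xm_def m power_mult)
  also have "\<dots> = ([:0, 1:] ^ d - 1) * (\<Sum>i<m. ([:0, 1:] ^ d) ^ i)" by (rule power_diff_1_eq)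
  finally show ?thesis unfolding xm_def by (metis dvd_triv_left)
qed

lemma mpi_mult: "map_poly (of_int :: int \<Rightarrow> 'a::comm_ring_1) (p * q) = map_poly of_int p * map_poly of_int q"
  by (rule poly_eqI) (simp add: coeff_map_poly coeff_mult)

lemma mpi_diff: "map_poly (of_int :: int \<Rightarrow> 'a::comm_ring_1) (p - q) = map_poly of_int p - map_poly of_int q"
  by (rule poly_eqI) (simp add: coeff_map_poly)

lemma mpi_power: "map_poly (of_int :: int \<Rightarrow> 'a::comm_ring_1) (p ^ n) = map_poly of_int p ^ n"
  by (induct n) (simp_all add: mpi_mult)

lemma mpi_prod: "map_poly (of_int :: int \<Rightarrow> 'a::comm_ring_1) (\<Prod>i\<in>I. f i) = (\<Prod>i\<in>I. map_poly of_int (f i))"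
  by (induct I rule: infinite_finite_induct) (simp_all add: mpi_mult)

lemma mpi_xm: "map_poly (of_int :: int \<Rightarrow> 'a::comm_ring_1) (xm k) = xm k"
  by (simp add: xm_def mpi_diff mpi_power map_poly_pCons)

lemma cis_pow_ne1:
  assumes "0 < k" "k < A"
  shows "cis (2 * pi / real A) ^ k \<noteq> 1"
proof
  assume "cis (2 * pi / real A) ^ k = 1"
  then have "cis (real k * (2 * pi / real A)) = 1" by (simp add: DeMoivre)
  then have "cos (real k * (2 * pi / real A)) = 1" by (metis cis.sel(1) one_complex.sel(1))
  then obtain n :: int where n: "real k * (2 * pi / real A) = of_int n * 2 * pi" using cos_one_2pi_int by blast
  then have "real k = n * real A" using assms by (simp add: field_simps)
  then have "int k = n * int A" by (metis of_int_eq_iff of_int_mult of_int_of_nat_eq)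
  moreover have "n \<le> 0 \<or> n \<ge> 1" by linarith
  moreover have "n \<le> 0 \<Longrightarrow> n * int A \<le> 0" by (simp add: mult_nonpos_nonneg)
  moreover have "n \<ge> 1 \<Longrightarrow> n * int A \<ge> 1 * int A" by (rule mult_right_mono) simp_all
  ultimately show False using assms by linarith
qed

lemma cis_pow_A: "A > 0 \<Longrightarrow> cis (2 * pi / real A) ^ A = 1"
  by (simp add: DeMoivre)


lemma prime_1_mod:
  fixes A :: nat
  assumes A0: "A > 0"
  shows "\<exists>p. prime p \<and> A dvd p - 1"
proof (cases "A = 1")
  case True
  then show ?thesis by (intro exI[of _ 2]) simp
next
  case False
  then have A2: "A \<ge> 2" using A0 by simp
  define Q where "Q = {q::nat. prime q \<and> q dvd A}"
  have "Q \<subseteq> {..A}" using A0 by (auto simp: Q_def dvd_imp_le)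
  then have finQ: "finite Q" by (rule finite_subset) simp
  have Qsmall: "0 < A div q \<and> A div q < A" if "q \<in> Q" for q
  proof -
    have q: "prime q" "q dvd A" using that by (auto simp: Q_def)
    then have "q \<ge> 2" by (simp add: prime_ge_2_nat)
    moreover have "A div q * q = A" using q by simp
    moreover have "q \<le> A" using q(2) A0 by (simp add: dvd_imp_le)
    ultimately show ?thesis using A0 by (simp add: div_greater_zero_iff div_less_dividend)
  qed
  define X :: "int poly" where "X = xm A"
  define S :: "int poly set" where "S = (\<lambda>q. xm (A div q)) ` Q"
  define P where "P = Lcm\<^sub>f\<^sub>i\<^sub>n S"
  have DP: "xm (A div q) dvd P" if "q \<in> Q" for q
    unfolding P_def S_def using that by (intro dvd_Lcm_fin) auto
  have PX: "P dvd X" unfolding P_def X_def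
  proof (rule Lcm_fin_least)
    show "finite S" using finQ by (simp add: S_def)
    fix b assume "b \<in> S"
    then obtain q where q: "q \<in> Q" "b = xm (A div q)" by (auto simp: S_def)
    have "q dvd A" using q by (simp add: Q_def)
    then have "A div q dvd A" by (metis dvd_div_mult_self dvd_triv_left)
    then show "b dvd xm A" using q by (simp add: xm_dvd)
  qed
  define Pi :: "int poly" where "Pi = (\<Prod>q\<in>Q. xm (A div q))"
  have PPi: "P dvd Pi" unfolding P_def
  proof (rule Lcm_fin_least)
    show "finite S" using finQ by (simp add: S_def)
    fix b assume "b \<in> S"
    then obtain q where q: "q \<in> Q" "b = xm (A div q)" by (auto simp: S_def)
    then show "b dvd Pi" unfolding Pi_def using finQ by auto
  qed
  have nXP: "\<not> X dvd P"
  proof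
    assume "X dvd P"
    then have "X dvd Pi" using PPi by (rule dvd_trans)
    then obtain K where K: "Pi = X * K" by blast
    define z where "z = cis (2 * pi / real A)"
    have "map_poly (of_int :: int \<Rightarrow> complex) Pi = map_poly of_int X * map_poly of_int K"
      using K by (simp add: mpi_mult)
    then have "poly (map_poly (of_int :: int \<Rightarrow> complex) Pi) z = poly (xm A) z * poly (map_poly of_int K) z"
      by (simp add: X_def mpi_xm)
    also have "\<dots> = 0" using A0 by (simp add: z_def cis_pow_A)
    finally have "(\<Prod>q\<in>Q. z ^ (A div q) - 1) = 0"
      by (simp add: Pi_def mpi_prod mpi_xm poly_prod)
    then obtain q where "q \<in> Q" "z ^ (A div q) = 1" using finQ by auto
    then show False using cis_pow_ne1[of "A div q" A] Qsmall unfolding z_def by auto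
  qed
  obtain R where XPR: "X = P * R" using PX by blast
  have dR: "degree R \<noteq> 0"
  proof
    assume "degree R = 0"
    then obtain c where c: "R = [:c:]" by (metis degree_eq_zeroE)
    have "coeff X 0 = -1" using A0 by (simp add: X_def poly_0_coeff_0[symmetric])
    moreover have "coeff X 0 = c * coeff P 0" using XPR c by simp
    ultimately have "c dvd 1" by (metis dvd_minus_iff dvd_triv_left)
    then have "\<bar>c\<bar> = 1" by (simp add: zdvd1_eq)
    then have "c = 1 \<or> c = -1" by linarith
    then have "P = Polynomial.smult c X" using XPR c by auto
    then have "X dvd P" by (metis dvd_triv_left mult.commute smult_dvd_cancel dvd_refl smult_dvd_iff mult_smult_right)
    then show False using nXP by simp
  qed
  have finv: "finite {x::int. poly R x = v}" for v
  proof -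
    have "R - [:v:] \<noteq> 0"
    proof
      assume "R - [:v:] = 0"
      then have "R = [:v:]" by simp
      then show False using dR by simp
    qed
    then have "finite {x. poly (R - [:v:]) x = 0}" by (rule poly_roots_finite)
    then show ?thesis by simp
  qed
  define B where "B = {t::nat. poly R (int (A * t)) \<in> {-1, 0, 1}}"
  have "finite B"
  proof -
    have "B = (\<lambda>t. int (A * t)) -` ({x. poly R x = -1} \<union> {x. poly R x = 0} \<union> {x. poly R x = 1})"
      by (auto simp: B_def)
    moreover have "inj (\<lambda>t. int (A * t))" using A0 by (auto simp: inj_def)
    moreover have "finite ({x. poly R x = -1} \<union> {x. poly R x = 0} \<union> {x. poly R x = 1})"
      using finv by simp
    ultimately show ?thesis by (metis finite_vimageI)
  qed
  then have "finite (B \<union> {0})" by simp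
  then obtain t where t: "t \<notin> B \<union> {0}" using ex_new_if_finite[of "B \<union> {0}"] by (metis infinite_UNIV_nat)
  define a where "a = A * t"
  have "t \<ge> 1" using t by simp
  then have "A * t \<ge> A * 1" by (rule mult_le_mono2)
  then have a2: "a \<ge> 2" using A2 unfolding a_def by linarith
  have Ra: "poly R (int a) \<notin> {-1, 0, 1}" using t by (simp add: B_def a_def)
  then have "poly R (int a) \<noteq> 0" "\<not> is_unit (poly R (int a))" by (auto simp: zdvd1_eq abs_eq_iff)
  then obtain pi where pi: "pi dvd poly R (int a)" "prime pi" using prime_divisor_exists by blast
  have pi0: "pi > 0" using pi(2) by (rule prime_gt_0_int)
  have Xa: "poly X (int a) = poly P (int a) * poly R (int a)" by (simp add: XPR)
  have hX: "pi dvd int a ^ A - 1"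
  proof -
    have "pi dvd poly X (int a)" using Xa pi(1) by simp
    then show ?thesis by (simp add: X_def)
  qed
  have hq: "\<not> pi dvd int a ^ (A div q) - 1" if q: "q \<in> Q" for q
  proof
    assume hb: "pi dvd int a ^ (A div q) - 1"
    define n where "n = A div q"
    define b where "b = int a ^ n"
    have qA: "prime q" "q dvd A" using q by (auto simp: Q_def)
    have An: "A = n * q" using qA by (simp add: n_def)
    define Y where "Y = (\<Sum>i<q. b ^ i)"
    have bq: "int a ^ A = b ^ q" by (simp add: b_def An power_mult)
    have XY: "poly X (int a) = (b - 1) * Y" by (simp add: X_def bq Y_def power_diff_1_eq)
    obtain M where M: "P = xm n * M" using DP[OF q] unfolding n_def by blast
    have "poly P (int a) = (b - 1) * poly M (int a)" by (simp add: M b_def)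
    then have e1: "(b - 1) * Y = (b - 1) * (poly M (int a) * poly R (int a))" using Xa XY by simp
    have "n > 0" using Qsmall[OF q] by (simp add: n_def)
    then have "int a ^ 1 \<le> int a ^ n" using a2 by (intro power_increasing) auto
    moreover have "int a ^ 1 \<ge> 2" using a2 by simp
    ultimately have "b \<ge> 2" unfolding b_def by linarith
    then have "b - 1 \<noteq> 0" by simp
    then have "Y = poly M (int a) * poly R (int a)" using e1 by simp
    then have piY: "pi dvd Y" using pi(1) by simp
    have "[b = 1] (mod pi)" using hb by (simp add: b_def cong_iff_dvd_diff n_def)
    then have "[Y = (\<Sum>i<q. 1 ^ i)] (mod pi)" unfolding Y_def by (intro cong_sum cong_pow) auto
    then have "[Y = int q] (mod pi)" by simp
    then have "pi dvd int q" using piY by (metis cong_dvd_iff)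
    moreover have "prime (int q)" using qA by simp
    ultimately have "pi = int q" using pi(2) by (simp add: primes_dvd_imp_eq)
    then have "pi dvd int a" using qA by (simp add: a_def)
    then have "pi dvd int a ^ A" using A0 by (meson dvd_power dvd_trans)
    then have "pi dvd 1" using hX by (metis dvd_diff_commute dvd_add_right_iff diff_add_cancel)
    then show False using pi(2) by (meson not_prime_unit)
  qed
  define p where "p = nat pi"
  have pp: "prime p" "int p = pi" using pi(2) pi0 by (auto simp: p_def)
  have c1: "[a ^ A = 1] (mod p)"
  proof -
    have "[int a ^ A = 1] (mod pi)" using hX by (simp add: cong_iff_dvd_diff)
    then show ?thesis using pp by (metis cong_int_iff of_nat_1 of_nat_power)
  qed
  have c2: "\<not> [a ^ (A div q) = 1] (mod p)" if "prime q" "q dvd A" for q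
  proof
    assume "[a ^ (A div q) = 1] (mod p)"
    then have "[int a ^ (A div q) = 1] (mod pi)" using pp by (metis cong_int_iff of_nat_1 of_nat_power)
    then have "pi dvd int a ^ (A div q) - 1" by (simp add: cong_iff_dvd_diff)
    then show False using hq[of q] that by (simp add: Q_def)
  qed
  show ?thesis using ord_full[OF pp(1) A0 c1 c2] pp(1) by blast
qed


lemma fin_prime_args:
  assumes "degree G \<ge> 1" "degree H \<ge> 1"
  shows "finite (prime_args (G * H))"
  using prime_args_sub[of G H] U_fin[OF assms(1)] U_fin[OF assms(2)] by (meson finite_Un finite_subset)

lemma card_prime_args_Nb:
  assumes "degree G \<ge> 1" "degree H \<ge> 1"
  shows "card (prime_args (G * H)) \<le> Nb (degree G) + Nb (degree H)"
proof -
  have "card (prime_args (G * H)) \<le> card (U G \<union> U H)"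
    using prime_args_sub[of G H] U_fin[OF assms(1)] U_fin[OF assms(2)] by (intro card_mono) auto
  also have "\<dots> \<le> card (U G) + card (U H)" by (rule card_Un_le)
  also have "\<dots> \<le> Nb (degree G) + Nb (degree H)" using U_card assms by (simp add: add_mono)
  finally show ?thesis .
qed

lemma map_of_int_degree: "degree (map_poly (of_int :: int \<Rightarrow> rat) G) = degree G"
  by (rule degree_map_poly) simp

lemma reducible_of:
  assumes "degree G \<ge> 1" "degree H \<ge> 1"
  shows "reducible_Q (G * H)"
proof -
  have "map_poly of_int (G * H) = map_poly of_int G * map_poly (of_int :: int \<Rightarrow> rat) H"
    by (rule map_poly_of_int_mult)
  moreover have "degree (map_poly (of_int :: int \<Rightarrow> rat) G) \<ge> 1" "degree (map_poly (of_int :: int \<Rightarrow> rat) H) \<ge> 1"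
    using assms by (simp_all only: map_of_int_degree)
  ultimately show ?thesis unfolding reducible_Q_def by blast
qed

lemma reducible_split:
  assumes "reducible_Q f" "degree f \<ge> 1"
  shows "\<exists>G H. f = G * H \<and> degree G \<ge> 1 \<and> degree H \<ge> 1 \<and> degree G + degree H = degree f"
proof -
  obtain g h :: "rat poly" where gh: "degree g \<ge> 1" "degree h \<ge> 1" "map_poly of_int f = g * h"
    using assms(1) unfolding reducible_Q_def by blast
  have f0: "f \<noteq> 0" using assms(2) by auto
  obtain G H where GH: "f = G * H" "degree G = degree g" "degree H = degree h"
    using gauss[OF gh(3) f0] by blast
  have "G \<noteq> 0" "H \<noteq> 0" using f0 GH by auto
  then have dd: "degree f = degree G + degree H" using GH by (simp add: degree_mult_eq)
  show ?thesis by (rule exI[of _ G], rule exI[of _ H]) (use GH gh dd in auto)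
qed

lemma part_i:
  assumes "degree f = n" "n \<ge> 2" "n \<noteq> 4" "n \<noteq> 5" "reducible_Q f"
  shows "finite (prime_args f) \<and> P f \<le> n + 2"
proof -
  obtain G H where GH: "f = G * H" "degree G \<ge> 1" "degree H \<ge> 1" "degree G + degree H = n"
    using reducible_split[of f] assms by auto
  have fin: "finite (prime_args f)" using fin_prime_args GH by simp
  have "P f \<le> n + 2"
  proof (cases "n = 3")
    case True
    then have "(degree G = 1 \<and> degree H = 2) \<or> (degree G = 2 \<and> degree H = 1)" using GH by auto
    then show ?thesis
    proof
      assume "degree G = 1 \<and> degree H = 2"
      then show ?thesis using n3_bound[of G H] GH True by (simp add: P_def)
    next
      assume "degree G = 2 \<and> degree H = 1"
      then show ?thesis using n3_bound[of H G] GH True by (simp add: P_def mult.commute)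
    qed
  next
    case False
    have "P f \<le> Nb (degree G) + Nb (degree H)" using card_prime_args_Nb GH by (simp add: P_def)
    moreover have "Nb (degree G) + Nb (degree H) \<le> n + 2"
      using GH False assms(3,4) unfolding Nb_def by auto
    ultimately show ?thesis by simp
  qed
  then show ?thesis using fin by simp
qed

lemma part_iii_upper:
  assumes "degree f = n" "n = 4 \<or> n = 5" "reducible_Q f"
  shows "finite (prime_args f) \<and> P f \<le> 8"
proof -
  obtain G H where GH: "f = G * H" "degree G \<ge> 1" "degree H \<ge> 1" "degree G + degree H = n"
    using reducible_split[of f] assms by auto
  have fin: "finite (prime_args f)" using fin_prime_args GH by simp
  have "P f \<le> Nb (degree G) + Nb (degree H)" using card_prime_args_Nb GH by (simp add: P_def)
  moreover have "Nb (degree G) + Nb (degree H) \<le> 8"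
    using GH assms(2) unfolding Nb_def by auto
  ultimately show ?thesis using fin by simp
qed


lemma quadU:
  fixes y :: int
  assumes "\<bar>y * y - 3 * y + 1\<bar> = 1"
  shows "0 \<le> y \<and> y \<le> 3"
proof -
  have "y * y - 3 * y + 1 = 1 \<or> y * y - 3 * y + 1 = -1" using assms by linarith
  then have "y * (y - 3) = 0 \<or> (y - 1) * (y - 2) = 0" by (auto simp: algebra_simps)
  then have "y = 0 \<or> y = 3 \<or> y = 1 \<or> y = 2" by auto
  then show ?thesis by auto
qed

definition G0 :: "int poly" where "G0 = [:1, -3, 1:]"
definition H4 :: "int poly" where "H4 = [:29, -11, 1:]"
definition H5 :: "int poly" where "H5 = [:-139, 83, -16, 1:]"

lemma poly_G0: "poly G0 m = m * m - 3 * m + 1"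
  by (simp add: G0_def algebra_simps)

lemma poly_H4: "poly H4 m = (m - 4) * (m - 4) - 3 * (m - 4) + 1"
  by (simp add: H4_def algebra_simps)

lemma poly_H5: "poly H5 m = 1 + (m - 4) * (m - 5) * (m - 7)"
  by (simp add: H5_def algebra_simps)

lemma U_G0: "U G0 \<subseteq> {0..3}"
  unfolding U_def using quadU by (auto simp: poly_G0)

lemma U_H4: "U H4 \<subseteq> {4..7}"
proof
  fix m assume "m \<in> U H4"
  then have "\<bar>(m - 4) * (m - 4) - 3 * (m - 4) + 1\<bar> = 1" by (simp add: U_def poly_H4)
  from quadU[OF this] show "m \<in> {4..7}" by auto
qed

lemma U_H5: "U H5 \<subseteq> {4..7}"
proof
  fix m assume "m \<in> U H5"
  then have h: "\<bar>1 + (m - 4) * (m - 5) * (m - 7)\<bar> = 1" by (simp add: U_def poly_H5)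
  define c where "c = (m - 4) * (m - 5) * (m - 7)"
  have "c = 0 \<or> c = -2" using h unfolding c_def by linarith
  then show "m \<in> {4..7}"
  proof
    assume "c = 0"
    then show ?thesis unfolding c_def by auto
  next
    assume c2: "c = -2"
    have "(m - 5) dvd c" unfolding c_def by simp
    then have "(m - 5) dvd 2" using c2 by simp
    then have "\<bar>m - 5\<bar> \<le> 2" using dvd_imp_le_int[of 2 "m - 5"] by simp
    then have "m = 3 \<or> m = 4 \<or> m = 5 \<or> m = 6 \<or> m = 7" by linarith
    moreover have "m \<noteq> 3" using c2 unfolding c_def by auto
    ultimately show ?thesis by auto
  qed
qed

lemma deg_G0: "degree G0 = 2" by (simp add: G0_def)
lemma deg_H4: "degree H4 = 2" by (simp add: H4_def)
lemma deg_H5: "degree H5 = 3" by (simp add: H5_def)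

lemma pa_eq:
  assumes "prime_args (G * H) \<subseteq> S" "S \<subseteq> prime_args (G * H)"
  shows "prime_args (G * H) = S" using assms by blast

lemma f4_args: "prime_args (G0 * H4) = {0..7}"
proof (rule pa_eq)
  have "U G0 \<union> U H4 \<subseteq> {0..7}" using U_G0 U_H4 by auto
  then show "prime_args (G0 * H4) \<subseteq> {0..7}" using prime_args_sub[of G0 H4] by (rule subset_trans[rotated])
  have e: "{0..7} = {0,1,2,3,4,5,6,7::int}" by auto
  have "poly (G0 * H4) 0 = 29" by (simp add: poly_G0 poly_H4)
  moreover have "prime \<bar>29::int\<bar>" by (simp add: prime_int_nat_transfer)
  ultimately have p0: "(0::int) \<in> prime_args (G0 * H4)" by (simp add: prime_args_def)
  have "poly (G0 * H4) 1 = -19" by (simp add: poly_G0 poly_H4)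
  moreover have "prime \<bar>-19::int\<bar>" by (simp add: prime_int_nat_transfer)
  ultimately have p1: "(1::int) \<in> prime_args (G0 * H4)" by (simp add: prime_args_def)
  have "poly (G0 * H4) 2 = -11" by (simp add: poly_G0 poly_H4)
  moreover have "prime \<bar>-11::int\<bar>" by (simp add: prime_int_nat_transfer)
  ultimately have p2: "(2::int) \<in> prime_args (G0 * H4)" by (simp add: prime_args_def)
  have "poly (G0 * H4) 3 = 5" by (simp add: poly_G0 poly_H4)
  moreover have "prime \<bar>5::int\<bar>" by (simp add: prime_int_nat_transfer)
  ultimately have p3: "(3::int) \<in> prime_args (G0 * H4)" by (simp add: prime_args_def)
  have "poly (G0 * H4) 4 = 5" by (simp add: poly_G0 poly_H4)
  moreover have "prime \<bar>5::int\<bar>" by (simp add: prime_int_nat_transfer)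
  ultimately have p4: "(4::int) \<in> prime_args (G0 * H4)" by (simp add: prime_args_def)
  have "poly (G0 * H4) 5 = -11" by (simp add: poly_G0 poly_H4)
  moreover have "prime \<bar>-11::int\<bar>" by (simp add: prime_int_nat_transfer)
  ultimately have p5: "(5::int) \<in> prime_args (G0 * H4)" by (simp add: prime_args_def)
  have "poly (G0 * H4) 6 = -19" by (simp add: poly_G0 poly_H4)
  moreover have "prime \<bar>-19::int\<bar>" by (simp add: prime_int_nat_transfer)
  ultimately have p6: "(6::int) \<in> prime_args (G0 * H4)" by (simp add: prime_args_def)
  have "poly (G0 * H4) 7 = 29" by (simp add: poly_G0 poly_H4)
  moreover have "prime \<bar>29::int\<bar>" by (simp add: prime_int_nat_transfer)
  ultimately have p7: "(7::int) \<in> prime_args (G0 * H4)" by (simp add: prime_args_def)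
  show "{0..7} \<subseteq> prime_args (G0 * H4)" unfolding e using p0 p1 p2 p3 p4 p5 p6 p7 by simp
qed

lemma f5_args: "prime_args (G0 * H5) = {0..7}"
proof (rule pa_eq)
  have "U G0 \<union> U H5 \<subseteq> {0..7}" using U_G0 U_H5 by auto
  then show "prime_args (G0 * H5) \<subseteq> {0..7}" using prime_args_sub[of G0 H5] by (rule subset_trans[rotated])
  have e: "{0..7} = {0,1,2,3,4,5,6,7::int}" by auto
  have "poly (G0 * H5) 0 = -139" by (simp add: poly_G0 poly_H5)
  moreover have "prime \<bar>-139::int\<bar>" by (simp add: prime_int_nat_transfer)
  ultimately have p0: "(0::int) \<in> prime_args (G0 * H5)" by (simp add: prime_args_def)
  have "poly (G0 * H5) 1 = 71" by (simp add: poly_G0 poly_H5)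
  moreover have "prime \<bar>71::int\<bar>" by (simp add: prime_int_nat_transfer)
  ultimately have p1: "(1::int) \<in> prime_args (G0 * H5)" by (simp add: prime_args_def)
  have "poly (G0 * H5) 2 = 29" by (simp add: poly_G0 poly_H5)
  moreover have "prime \<bar>29::int\<bar>" by (simp add: prime_int_nat_transfer)
  ultimately have p2: "(2::int) \<in> prime_args (G0 * H5)" by (simp add: prime_args_def)
  have "poly (G0 * H5) 3 = -7" by (simp add: poly_G0 poly_H5)
  moreover have "prime \<bar>-7::int\<bar>" by (simp add: prime_int_nat_transfer)
  ultimately have p3: "(3::int) \<in> prime_args (G0 * H5)" by (simp add: prime_args_def)
  have "poly (G0 * H5) 4 = 5" by (simp add: poly_G0 poly_H5)
  moreover have "prime \<bar>5::int\<bar>" by (simp add: prime_int_nat_transfer)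
  ultimately have p4: "(4::int) \<in> prime_args (G0 * H5)" by (simp add: prime_args_def)
  have "poly (G0 * H5) 5 = 11" by (simp add: poly_G0 poly_H5)
  moreover have "prime \<bar>11::int\<bar>" by (simp add: prime_int_nat_transfer)
  ultimately have p5: "(5::int) \<in> prime_args (G0 * H5)" by (simp add: prime_args_def)
  have "poly (G0 * H5) 6 = -19" by (simp add: poly_G0 poly_H5)
  moreover have "prime \<bar>-19::int\<bar>" by (simp add: prime_int_nat_transfer)
  ultimately have p6: "(6::int) \<in> prime_args (G0 * H5)" by (simp add: prime_args_def)
  have "poly (G0 * H5) 7 = 29" by (simp add: poly_G0 poly_H5)
  moreover have "prime \<bar>29::int\<bar>" by (simp add: prime_int_nat_transfer)
  ultimately have p7: "(7::int) \<in> prime_args (G0 * H5)" by (simp add: prime_args_def)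
  show "{0..7} \<subseteq> prime_args (G0 * H5)" unfolding e using p0 p1 p2 p3 p4 p5 p6 p7 by simp
qed

lemma ex4: "\<exists>f. degree f = 4 \<and> reducible_Q f \<and> finite (prime_args f) \<and> P f = 8"
proof (intro exI conjI)
  show "degree (G0 * H4) = 4" by (simp add: degree_mult_eq deg_G0 deg_H4 G0_def H4_def)
  show "reducible_Q (G0 * H4)" by (rule reducible_of) (simp_all add: deg_G0 deg_H4)
  show "finite (prime_args (G0 * H4))" by (simp add: f4_args)
  show "P (G0 * H4) = 8" by (simp add: P_def f4_args)
qed

lemma ex5: "\<exists>f. degree f = 5 \<and> reducible_Q f \<and> finite (prime_args f) \<and> P f = 8"
proof (intro exI conjI)
  show "degree (G0 * H5) = 5" by (simp add: degree_mult_eq deg_G0 deg_H5 G0_def H5_def)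
  show "reducible_Q (G0 * H5)" by (rule reducible_of) (simp_all add: deg_G0 deg_H5)
  show "finite (prime_args (G0 * H5))" by (simp add: f5_args)
  show "P (G0 * H5) = 8" by (simp add: P_def f5_args)
qed

lemma ex2: "\<exists>f. degree f = 2 \<and> reducible_Q f \<and> finite (prime_args f) \<and> P f \<ge> 3"
proof (intro exI conjI)
  define F :: "int poly" where "F = [:0, 1:] * [:4, 1:]"
  show "degree F = 2" by (simp add: F_def)
  show "reducible_Q F" unfolding F_def by (rule reducible_of) simp_all
  show fin: "finite (prime_args F)" unfolding F_def by (rule fin_prime_args) simp_all
  have "poly F (1) = 5" by (simp add: F_def)
  moreover have "prime \<bar>5::int\<bar>" by (simp add: prime_int_nat_transfer)
  ultimately have q0: "(1::int) \<in> prime_args F" by (simp add: prime_args_def)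
  have "poly F (-1) = -3" by (simp add: F_def)
  moreover have "prime \<bar>-3::int\<bar>" by (simp add: prime_int_nat_transfer)
  ultimately have q1: "(-1::int) \<in> prime_args F" by (simp add: prime_args_def)
  have "poly F (-3) = -3" by (simp add: F_def)
  moreover have "prime \<bar>-3::int\<bar>" by (simp add: prime_int_nat_transfer)
  ultimately have q2: "(-3::int) \<in> prime_args F" by (simp add: prime_args_def)
  have "poly F (-5) = 5" by (simp add: F_def)
  moreover have "prime \<bar>5::int\<bar>" by (simp add: prime_int_nat_transfer)
  ultimately have q3: "(-5::int) \<in> prime_args F" by (simp add: prime_args_def)
  have "{1, -1, -3, -5} \<subseteq> prime_args F" using q0 q1 q2 q3 by simp
  then have "card {1, -1, -3, -5 :: int} \<le> P F" unfolding P_def using fin by (rule card_mono[rotated])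
  then show "P F \<ge> 3" by simp
qed


lemma prime_set_exists:
  "\<exists>Qi :: int set. finite Qi \<and> card Qi = k \<and> (\<forall>q\<in>Qi. prime q \<and> q \<ge> 7)"
proof -
  have "infinite ({p::nat. prime p} - {..6})" using primes_infinite by (intro Diff_infinite_finite) auto
  then obtain B where B: "B \<subseteq> {p::nat. prime p} - {..6}" "finite B" "card B = k"
    using infinite_arbitrarily_large by blast
  have "card (int ` B) = k" using B by (simp add: card_image)
  moreover have "\<forall>q\<in>int ` B. prime q \<and> q \<ge> 7" using B by auto
  ultimately show ?thesis using B by blast
qed

lemma core:
  fixes T :: "int poly" and RT Qi :: "int set" and k :: nat
  assumes T0: "T \<noteq> 0" and T1: "poly T 1 = poly T (-1)" "poly T 1 \<noteq> 0"
    and RT: "finite RT" "card RT = degree T"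
      "\<And>r. r \<in> RT \<Longrightarrow> poly T r = 0 \<and> prime \<bar>r\<bar> \<and> \<bar>r\<bar> \<le> 5"
    and Qi: "finite Qi" "card Qi = k" "\<And>q. q \<in> Qi \<Longrightarrow> prime q \<and> q \<ge> 7"
    and d1: "degree T + 2 * k \<ge> 1"
  shows "\<exists>f. degree f = degree T + 2 * k + 1 \<and> reducible_Q f \<and> finite (prime_args f) \<and>
             P f \<ge> degree T + 2 * k + 2"
proof -
  define K where "K = T * (\<Prod>q\<in>Qi. [:-(q*q), 0, 1:])"
  have polyK: "poly K x = poly T x * (\<Prod>q\<in>Qi. x * x - q * q)" for x
    by (simp add: K_def poly_prod algebra_simps)
  define M where "M = poly K 1"
  have KM: "poly K (-1) = M" unfolding M_def polyK using T1 by simp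
  have M0: "M \<noteq> 0"
  proof -
    have "(\<Prod>q\<in>Qi. (1::int) * 1 - q * q) \<noteq> 0"
    proof -
      have "1 * 1 - q * q \<noteq> 0" if "q \<in> Qi" for q :: int
      proof -
        have "q \<ge> 7" using Qi(3)[OF that] by simp
        then have "q * q \<ge> 7 * 7" by (metis mult_mono order_trans le_cases nle_le zero_le_numeral)
        then show ?thesis by simp
      qed
      then show ?thesis using Qi(1) by simp
    qed
    then show ?thesis unfolding M_def polyK using T1 by simp
  qed
  obtain p :: nat where p: "prime p" "nat \<bar>M\<bar> dvd p - 1"
    using prime_1_mod[of "nat \<bar>M\<bar>"] M0 by auto
  obtain j where j: "p - 1 = nat \<bar>M\<bar> * j" using p(2) by blast
  have p2: "p \<ge> 2" using p(1) by (simp add: prime_ge_2_nat)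
  have jint: "int p - 1 = \<bar>M\<bar> * int j" using j p2 by (metis of_nat_1 of_nat_diff of_nat_mult abs_ge_zero int_nat_eq le_trans one_le_numeral)
  define c where "c = sgn M * int j"
  have cM: "c * M = int p - 1" unfolding c_def using jint by (simp add: abs_sgn mult.commute mult.left_commute)
  have c0: "c \<noteq> 0" using cM p2 by auto
  define H where "H = 1 + Polynomial.smult c K"
  have polyH: "poly H x = 1 + c * poly K x" for x by (simp add: H_def)
  define f where "f = [:0, 1:] * H"
  have polyf: "poly f x = x * poly H x" for x by (simp add: f_def)
  have K0: "\<forall>q\<in>Qi. [:-(q*q), 0, 1:] \<noteq> (0 :: int poly)" by simp
  have dK: "degree K = degree T + 2 * k"
  proof -
    have "degree (\<Prod>q\<in>Qi. [:-(q*q), 0, 1:]) = (\<Sum>q\<in>Qi. degree [:-(q*q), 0, (1::int):])"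
      by (rule degree_prod_eq_sum_degree) simp
    also have "\<dots> = 2 * k" using Qi(2) by simp
    finally have "degree (\<Prod>q\<in>Qi. [:-(q*q), 0, 1:]) = 2 * k" .
    moreover have "(\<Prod>q\<in>Qi. [:-(q*q), 0, 1:]) \<noteq> (0 :: int poly)" using Qi(1) by simp
    ultimately show ?thesis unfolding K_def using T0 by (simp add: degree_mult_eq)
  qed
  have dH: "degree H = degree T + 2 * k"
  proof -
    have "degree (Polynomial.smult c K) = degree T + 2 * k" using c0 dK by simp
    then have "degree (1 :: int poly) < degree (Polynomial.smult c K)" using d1 by (simp only: degree_1)
    then have "degree H = degree (Polynomial.smult c K)" unfolding H_def by (rule degree_add_eq_right)
    then show ?thesis using c0 dK by simp
  qed
  have H0: "H \<noteq> 0" using dH d1 by auto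
  have df: "degree f = degree T + 2 * k + 1" unfolding f_def using H0 dH by (simp add: degree_mult_eq)
  have red: "reducible_Q f" unfolding f_def by (rule reducible_of) (use dH d1 in auto)
  have fin: "finite (prime_args f)" unfolding f_def by (rule fin_prime_args) (use dH d1 in auto)
  define W where "W = {1, -1} \<union> RT \<union> Qi \<union> uminus ` Qi"
  have W: "W \<subseteq> prime_args f"
  proof
    fix x assume "x \<in> W"
    then consider "x = 1" | "x = -1" | "x \<in> RT" | "x \<in> Qi" | "-x \<in> Qi" unfolding W_def by auto
    then show "x \<in> prime_args f"
    proof cases
      case 1
      have "poly f x = int p" using 1 cM by (simp add: polyf polyH M_def mult.commute)
      then show ?thesis using p(1) by (simp add: prime_args_def)
    next
      case 2
      have "poly f x = - int p" using 2 cM KM by (simp add: polyf polyH mult.commute)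
      then show ?thesis using p(1) by (simp add: prime_args_def)
    next
      case 3
      then have "poly T x = 0" "prime \<bar>x\<bar>" using RT(3) by auto
      then have "poly f x = x" by (simp add: polyf polyH polyK)
      then show ?thesis using \<open>prime \<bar>x\<bar>\<close> by (simp add: prime_args_def)
    next
      case 4
      then have "(\<Prod>q\<in>Qi. x * x - q * q) = 0" using Qi(1) by (auto intro: bexI[of _ x])
      then have "poly f x = x" by (simp add: polyf polyH polyK)
      moreover have "prime \<bar>x\<bar>" using Qi(3)[OF 4] by simp
      ultimately show ?thesis by (simp add: prime_args_def)
    next
      case 5
      then have "(\<Prod>q\<in>Qi. x * x - q * q) = 0" using Qi(1) by (auto intro: bexI[of _ "-x"])
      then have "poly f x = x" by (simp add: polyf polyH polyK)
      moreover have "prime \<bar>x\<bar>" using Qi(3)[OF 5] by simp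
      ultimately show ?thesis by (simp add: prime_args_def)
    qed
  qed
  have cardW: "card W = degree T + 2 * k + 2"
  proof -
    have RTb: "\<bar>r\<bar> \<le> 5 \<and> r \<noteq> 1 \<and> r \<noteq> -1" if "r \<in> RT" for r
    proof -
      have h: "prime \<bar>r\<bar>" "\<bar>r\<bar> \<le> 5" using RT(3)[OF that] by auto
      have "\<bar>r\<bar> \<noteq> 1" using h(1) by (metis not_prime_1)
      then show ?thesis using h(2) by auto
    qed
    have Qb: "q \<ge> 7" if "q \<in> Qi" for q using Qi(3)[OF that] by auto
    have s1: "\<bar>x\<bar> \<le> 5" if "x \<in> {1, -1} \<union> RT" for x using that RTb by auto
    have d1': "({1, -1} \<union> RT) \<inter> Qi = {}"
    proof (rule ccontr)
      assume "({1, -1} \<union> RT) \<inter> Qi \<noteq> {}"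
      then obtain x where "x \<in> {1, -1} \<union> RT" "x \<in> Qi" by blast
      then show False using s1 Qb by fastforce
    qed
    have d2': "({1, -1} \<union> RT \<union> Qi) \<inter> uminus ` Qi = {}"
    proof (rule ccontr)
      assume "({1, -1} \<union> RT \<union> Qi) \<inter> uminus ` Qi \<noteq> {}"
      then obtain x where x: "x \<in> {1, -1} \<union> RT \<union> Qi" "x \<in> uminus ` Qi" by blast
      then obtain y where y: "y \<in> Qi" "x = - y" by blast
      have "-x \<ge> 7" using Qb y by simp
      moreover have "\<bar>x\<bar> \<le> 5 \<or> x \<ge> 7" using x(1) s1 Qb by blast
      ultimately show False by linarith
    qed
    have d3': "{1, -1} \<inter> RT = {}" using RTb by blast
    have cneg: "card (uminus ` Qi) = k" using Qi by (simp add: card_image)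
    have "card W = card ({1, -1} \<union> RT \<union> Qi) + card (uminus ` Qi)"
      unfolding W_def using d2' Qi(1) RT(1) by (intro card_Un_disjoint) auto
    also have "card ({1, -1} \<union> RT \<union> Qi) = card ({1, -1} \<union> RT) + card Qi"
      using d1' Qi(1) RT(1) by (intro card_Un_disjoint) auto
    also have "card ({1, -1} \<union> RT) = card {1, -1 :: int} + card RT"
      using d3' RT(1) by (intro card_Un_disjoint) auto
    finally show ?thesis using cneg Qi(2) RT(2) by simp
  qed
  have "P f \<ge> degree T + 2 * k + 2" unfolding P_def using card_mono[OF fin W] cardW by simp
  then show ?thesis using df red fin by blast
qed


lemma odd_case:
  assumes "k \<ge> 1"
  shows "\<exists>f. degree f = 2 * k + 1 \<and> reducible_Q f \<and> finite (prime_args f) \<and> P f \<ge> 2 * k + 2"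
proof -
  obtain Qi :: "int set" where Qi: "finite Qi" "card Qi = k" "\<forall>q\<in>Qi. prime q \<and> q \<ge> 7"
    using prime_set_exists by blast
  have "\<exists>f. degree f = degree (1::int poly) + 2 * k + 1 \<and> reducible_Q f \<and> finite (prime_args f) \<and>
             P f \<ge> degree (1::int poly) + 2 * k + 2"
  proof (rule core[where RT = "{}" and Qi = Qi])
    show "\<And>q. q \<in> Qi \<Longrightarrow> prime q \<and> q \<ge> 7" using Qi(3) by blast
  qed (use Qi assms in simp_all)
  then show ?thesis by simp
qed

lemma even_case:
  "\<exists>f. degree f = 2 * k + 4 \<and> reducible_Q f \<and> finite (prime_args f) \<and> P f \<ge> 2 * k + 5"
proof -
  obtain Qi :: "int set" where Qi: "finite Qi" "card Qi = k" "\<forall>q\<in>Qi. prime q \<and> q \<ge> 7"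
    using prime_set_exists by blast
  define T :: "int poly" where "T = [:30, -1, -6, 1:]"
  have dT: "degree T = 3" by (simp add: T_def)
  have p2: "prime (2::int)" "prime (3::int)" "prime (5::int)" by (simp_all add: prime_int_nat_transfer)
  have RT: "r \<in> {-2, 3, 5} \<Longrightarrow> poly T r = 0 \<and> prime \<bar>r\<bar> \<and> \<bar>r\<bar> \<le> 5" for r :: int
  proof -
    assume "r \<in> {-2, 3, 5}"
    then have "r = -2 \<or> r = 3 \<or> r = 5" by simp
    then show ?thesis using p2 by (elim disjE) (simp_all add: T_def)
  qed
  have T0: "T \<noteq> 0" by (simp add: T_def)
  have T1: "poly T 1 = poly T (-1)" "poly T 1 \<noteq> 0" by (simp_all add: T_def)
  have c3: "card {-2, 3, 5 :: int} = degree T" using dT by simp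
  have d1: "degree T + 2 * k \<ge> 1" using dT by simp
  have Q3: "\<And>q. q \<in> Qi \<Longrightarrow> prime q \<and> q \<ge> 7" using Qi(3) by blast
  have "\<exists>f. degree f = degree T + 2 * k + 1 \<and> reducible_Q f \<and> finite (prime_args f) \<and>
             P f \<ge> degree T + 2 * k + 2"
    by (rule core[OF T0 T1 _ c3 RT Qi(1,2) Q3 d1]) simp
  then show ?thesis using dT by (simp add: add.commute add.left_commute)
qed

lemma part_ii:
  assumes "n \<ge> 2"
  shows "\<exists>f. degree f = n \<and> reducible_Q f \<and> finite (prime_args f) \<and> P f \<ge> n + 1"
proof -
  have "n = 2 \<or> odd n \<or> (even n \<and> n \<ge> 4)" using assms by presburger
  then consider "n = 2" | "odd n" | "even n" "n \<ge> 4" by blast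
  then show ?thesis
  proof cases
    case 1
    then show ?thesis using ex2 by simp
  next
    case 2
    then obtain k where k: "n = 2 * k + 1" by (metis oddE)
    then have "k \<ge> 1" using assms by simp
    from odd_case[OF this] show ?thesis using k by simp
  next
    case 3
    then obtain m where m: "n = 2 * m" by (metis evenE)
    then have e: "2 * (m - 2) + 4 = n" using 3 by simp
    obtain f where f: "degree f = 2 * (m - 2) + 4" "reducible_Q f" "finite (prime_args f)"
      "P f \<ge> 2 * (m - 2) + 5" using even_case[of "m - 2"] by blast
    show ?thesis by (rule exI[of _ f]) (use f e in auto)
  qed
qed


theorem theorem1:
  fixes n :: nat
  assumes "n \<ge> 2"
  shows "(n \<noteq> 4 \<and> n \<noteq> 5 \<longrightarrow>
            (\<forall>f :: int poly. degree f = n \<and> reducible_Q f \<longrightarrow>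
               finite (prime_args f) \<and> P f \<le> n + 2))
       \<and> (\<exists>f :: int poly. degree f = n \<and> reducible_Q f \<and>
               finite (prime_args f) \<and> P f \<ge> n + 1)
       \<and> (n = 4 \<or> n = 5 \<longrightarrow>
            (\<forall>f :: int poly. degree f = n \<and> reducible_Q f \<longrightarrow>
               finite (prime_args f) \<and> P f \<le> 8)
          \<and> (\<exists>f :: int poly. degree f = n \<and> reducible_Q f \<and>
               finite (prime_args f) \<and> P f = 8))"
proof -
  have i: "n \<noteq> 4 \<and> n \<noteq> 5 \<longrightarrow>
            (\<forall>f :: int poly. degree f = n \<and> reducible_Q f \<longrightarrow>
               finite (prime_args f) \<and> P f \<le> n + 2)"
    using part_i assms by blast
  have ii: "\<exists>f :: int poly. degree f = n \<and> reducible_Q f \<and>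
               finite (prime_args f) \<and> P f \<ge> n + 1"
    using part_ii[OF assms] .
  have iii1: "n = 4 \<or> n = 5 \<longrightarrow>
            (\<forall>f :: int poly. degree f = n \<and> reducible_Q f \<longrightarrow>
               finite (prime_args f) \<and> P f \<le> 8)"
    using part_iii_upper by blast
  have iii2: "n = 4 \<or> n = 5 \<longrightarrow> (\<exists>f :: int poly. degree f = n \<and> reducible_Q f \<and>
               finite (prime_args f) \<and> P f = 8)"
    using ex4 ex5 by blast
  show ?thesis using i ii iii1 iii2 by blast
qed

end
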